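(* Let $\mathcal{M}$ be a nonempty bounded convex subset of a normed space $\mathcal{E}$ and let $T\colon\mathcal{M}\to\mathcal{M}$ be a $\lambda$-contraction (i.e. $\|Tx-Ty\|\le\lambda\|x-y\|$ for all $x,y\in\mathcal{M}$) with $\lambda\in(0,1)$. Then there exists a sequence $(x_n)_{n\in\mathbb{N}}$ in $\mathcal{M}$ such that for all $n,m\in\mathbb{N}$, $$\|x_n-T(x_n)\|<\frac{1-\lambda}{n}(1+\operatorname{diam}\mathcal{M})\quad\text{and}\quad\|x_n-x_m\|\le\Big(\frac1n+\frac1m\Big)(1+\operatorname{diam}\mathcal{M}).$$ *)

theory Defs
  imports "HOL-Analysis.Analysis"
begin

end

theory Submission
  imports Defs
begin

theorem lemma3p4:
  fixes M :: "'a::real_normed_vector set"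
    and T :: "'a \<Rightarrow> 'a"
    and lam :: real
  assumes "M \<noteq> {}" and "bounded M" and "convex M"
    and "T ` M \<subseteq> M"
    and "\<And>x y. x \<in> M \<Longrightarrow> y \<in> M \<Longrightarrow> norm (T x - T y) \<le> lam * norm (x - y)"
    and "0 < lam" and "lam < 1"
  shows "\<exists>x :: nat \<Rightarrow> 'a. (\<forall>n. x n \<in> M) \<and>
     (\<forall>n\<ge>1. norm (x n - T (x n)) < (1 - lam) / real n * (1 + diameter M)) \<and>
     (\<forall>n\<ge>1. \<forall>m\<ge>1. norm (x n - x m) \<le> (1 / real n + 1 / real m) * (1 + diameter M))"
proof -
  obtain x0 where x0: "x0 \<in> M" using assms(1) by blast
  define D where "D = diameter M"
  have Dle: "norm (a - b) \<le> D" if "a \<in> M" "b \<in> M" for a b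
    unfolding D_def using diameter_bounded_bound[OF assms(2) that] by (simp add: dist_norm)
  have D0: "0 \<le> D" using Dle[OF x0 x0] by simp
  define y where "y k = (T ^^ k) x0" for k
  have yM: "y k \<in> M" for k
    by (induction k) (use x0 assms(4) in \<open>auto simp: y_def\<close>)
  have ysuc: "y (Suc k) = T (y k)" for k by (simp add: y_def)
  have step: "norm (y k - y (Suc k)) \<le> lam ^ k * D" for k
  proof (induction k)
    case 0 then show ?case using Dle yM by simp
  next
    case (Suc k)
    have "norm (y (Suc k) - y (Suc (Suc k))) \<le> lam * norm (y k - y (Suc k))"
      using assms(5)[OF yM[of k] yM[of "Suc k"]] by (simp add: ysuc)
    also have "\<dots> \<le> lam * (lam ^ k * D)" using Suc assms(6) by (intro mult_left_mono) auto
    finally show ?case by simp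
  qed
  have gap: "norm (y j - y (j + d)) \<le> D * (lam ^ j - lam ^ (j + d)) / (1 - lam)" for j d
  proof (induction d)
    case 0 then show ?case by simp
  next
    case (Suc d)
    have "norm (y j - y (j + Suc d)) \<le> norm (y j - y (j + d)) + norm (y (j + d) - y (Suc (j + d)))"
      using norm_triangle_ineq[of "y j - y (j + d)" "y (j + d) - y (Suc (j + d))"] by simp
    also have "\<dots> \<le> D * (lam ^ j - lam ^ (j + d)) / (1 - lam) + lam ^ (j + d) * D"
      using Suc step by (intro add_mono) auto
    also have "\<dots> = D * (lam ^ j - lam ^ (j + Suc d)) / (1 - lam)"
    proof -
      have e: "lam ^ (j + Suc d) = lam * lam ^ (j + d)" by simp
      have "1 - lam \<noteq> 0" using assms(7) by simp
      then show ?thesis unfolding e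
        by (simp add: divide_simps) (simp add: algebra_simps)
    qed
    finally show ?case .
  qed
  have gap2: "norm (y j - y k) \<le> lam ^ min j k * D / (1 - lam)" for j k
  proof -
    have A: "norm (y j - y (j + d)) \<le> lam ^ j * D / (1 - lam)" for j d
    proof -
      have "D * (lam ^ j - lam ^ (j + d)) / (1 - lam) \<le> lam ^ j * D / (1 - lam)"
        using assms(6,7) D0 by (intro divide_right_mono) (auto simp: algebra_simps)
      then show ?thesis using gap[of j d] by linarith
    qed
    show ?thesis
    proof (cases "j \<le> k")
      case True
      then obtain d where "k = j + d" using le_Suc_ex by blast
      then show ?thesis using A[of j d] True by (simp add: min_def)
    next
      case False
      then obtain d where "j = k + d" using le_Suc_ex[of k j] by auto
      then show ?thesis using A[of k d] False by (simp add: min_def norm_minus_commute)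
    qed
  qed
  have ex: "\<exists>k. lam ^ k < (1 - lam) / real n" if "n \<ge> 1" for n :: nat
    using real_arch_pow_inv[of "(1 - lam) / real n" lam] assms(7) that by simp
  define kk where "kk n = (SOME k. lam ^ k < (1 - lam) / real n)" for n :: nat
  have kk: "lam ^ kk n < (1 - lam) / real n" if "n \<ge> 1" for n
    unfolding kk_def using someI_ex[OF ex[OF that]] .
  define x where "x n = y (kk n)" for n
  have kk2: "lam ^ kk n * D / (1 - lam) \<le> 1 / real n * (1 + D)" if "n \<ge> 1" for n
  proof -
    have "lam ^ kk n * D \<le> (1 - lam) / real n * (1 + D)"
    proof -
      have "lam ^ kk n * D \<le> lam ^ kk n * (1 + D)" using assms(6) by simp
      also have "\<dots> \<le> (1 - lam) / real n * (1 + D)"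
        using kk[OF that] D0 by (intro mult_right_mono) auto
      finally show ?thesis .
    qed
    then show ?thesis using assms(7) by (simp add: field_simps)
  qed
  show ?thesis
  proof (intro exI[of _ x] conjI allI impI)
    fix n show "x n \<in> M" using yM x_def by simp
  next
    fix n :: nat assume n: "n \<ge> 1"
    have "norm (x n - T (x n)) \<le> lam ^ kk n * D" using step x_def ysuc by metis
    also have "\<dots> < (1 - lam) / real n * (1 + D)"
    proof -
      have "lam ^ kk n * D \<le> lam ^ kk n * (1 + D)" using assms(6) by simp
      also have "\<dots> < (1 - lam) / real n * (1 + D)"
        using kk[OF n] D0 by (intro mult_strict_right_mono) auto
      finally show ?thesis .
    qed
    finally show "norm (x n - T (x n)) < (1 - lam) / real n * (1 + diameter M)" by (simp add: D_def)
  next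
    fix n m :: nat assume n: "n \<ge> 1" and m: "m \<ge> 1"
    have "norm (x n - x m) \<le> lam ^ min (kk n) (kk m) * D / (1 - lam)" using gap2 x_def by simp
    also have "\<dots> \<le> lam ^ kk n * D / (1 - lam) + lam ^ kk m * D / (1 - lam)"
    proof -
      have "lam ^ min (kk n) (kk m) \<le> lam ^ kk n + lam ^ kk m"
        using assms(6) by (cases "kk n \<le> kk m") (auto simp: min_def)
      then have "lam ^ min (kk n) (kk m) * D \<le> (lam ^ kk n + lam ^ kk m) * D"
        using D0 by (rule mult_right_mono)
      then have "lam ^ min (kk n) (kk m) * D / (1 - lam) \<le> (lam ^ kk n + lam ^ kk m) * D / (1 - lam)"
        using assms(7) by (intro divide_right_mono) auto
      then show ?thesis by (simp add: add_divide_distrib distrib_right)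
    qed
    also have "\<dots> \<le> 1 / real n * (1 + D) + 1 / real m * (1 + D)"
      using kk2[OF n] kk2[OF m] by linarith
    finally show "norm (x n - x m) \<le> (1 / real n + 1 / real m) * (1 + diameter M)"
      by (simp add: D_def algebra_simps)
  qed
qed

end
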